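(* Let $\mathcal{H}$ be a real Hilbert space. For each $i=1,2,\ldots,N$, let $f_i:\mathcal{H}\to\mathcal{H}$ be $\alpha_i$-inverse strongly monotone ($\alpha_i>0$) and let $C_i\subset\mathcal{H}$ be nonempty, closed and convex, with $\bigcap_{i=1}^N C_i\neq\emptyset$. Let $\Psi:=\bigcap_{i=1}^N SOL(C_i,f_i)$ and assume $\Psi\neq\emptyset$. Set $\alpha:=\min_i\alpha_i$ and take $\lambda\in(0,2\alpha)$. Let $T_i:=P_{C_i}(I-\lambda f_i)$, i.e. $T_i(x)=P_{C_i}(x-\lambda f_i(x))$. Given an arbitrary $x^0\in\mathcal{H}$, define $x^{k+1}=(T_1\circ T_2\circ\cdots\circ T_N)(x^k)$ for $k\ge 0$. Then $\{x^k\}_{k=0}^\infty$ converges weakly to a point $x^\ast\in\Psi$, and moreover $x^\ast=\lim_{k\to\infty}P_\Psi(x^k)$ (strong limit).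
   Context: An operator $h:\mathcal{H}\to\mathcal{H}$ is $\beta$-inverse strongly monotone ($\beta>0$) if $\langle h(x)-h(y),x-y\rangle\geq\beta\|h(x)-h(y)\|^2$ for all $x,y\in\mathcal{H}$. For a nonempty closed convex set $D\subset\mathcal{H}$, $P_D$ denotes the metric (nearest point) projection onto $D$. For such $D$ and an operator $h$, $SOL(D,h)$ denotes the set of $x^\ast\in D$ with $\langle h(x^\ast),x-x^\ast\rangle\geq 0$ for all $x\in D$. The set $\Psi$ is closed and convex. *)

theory Defs
  imports "HOL-Analysis.Analysis"
begin

definition inv_strongly_monotone :: "real \<Rightarrow> ('a::real_inner \<Rightarrow> 'a) \<Rightarrow> bool" where
  "inv_strongly_monotone \<beta> h \<longleftrightarrow> \<beta> > 0 \<and>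
     (\<forall>x y. inner (h x - h y) (x - y) \<ge> \<beta> * (norm (h x - h y))\<^sup>2)"

definition metric_proj :: "'a::real_inner set \<Rightarrow> 'a \<Rightarrow> 'a" where
  "metric_proj D x = (SOME p. p \<in> D \<and> (\<forall>y\<in>D. norm (x - p) \<le> norm (x - y)))"

definition SOL :: "'a::real_inner set \<Rightarrow> ('a \<Rightarrow> 'a) \<Rightarrow> 'a set" where
  "SOL D h = {xs \<in> D. \<forall>x\<in>D. inner (h xs) (x - xs) \<ge> 0}"

definition weakly_converges_to :: "(nat \<Rightarrow> 'a::real_inner) \<Rightarrow> 'a \<Rightarrow> bool" where
  "weakly_converges_to x l \<longleftrightarrow> (\<forall>y. (\<lambda>k. inner (x k) y) \<longlonglongrightarrow> inner l y)"

text \<open>compose_upto T n = T 1 \<circ> T 2 \<circ> ... \<circ> T n\<close>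
fun compose_upto :: "(nat \<Rightarrow> 'a \<Rightarrow> 'a) \<Rightarrow> nat \<Rightarrow> 'a \<Rightarrow> 'a" where
  "compose_upto T 0 = id"
| "compose_upto T (Suc n) = compose_upto T n \<circ> T (Suc n)"

end

theory Submission
  imports Defs "HOL-Library.Diagonal_Subsequence"
begin

lemma norm_diff_sq: "(norm (a - b))\<^sup>2 = (norm a)\<^sup>2 - 2 * inner a b + (norm b)\<^sup>2"
  for a b :: "'a::real_inner"
  by (simp add: power2_norm_eq_inner inner_diff_left inner_diff_right inner_commute)

lemma norm_add_sq: "(norm (a + b))\<^sup>2 = (norm a)\<^sup>2 + 2 * inner a b + (norm b)\<^sup>2"
  for a b :: "'a::real_inner"
  by (simp add: power2_norm_eq_inner inner_add_left inner_add_right inner_commute)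

lemma norm_diff_scale_sq: "(norm (u - t *\<^sub>R v))\<^sup>2 = (norm u)\<^sup>2 - 2 * t * inner u v + t\<^sup>2 * (norm v)\<^sup>2"
  for u v :: "'a::real_inner"
  by (simp add: norm_diff_sq power_mult_distrib)

lemma parallelogram: "(norm (a - b))\<^sup>2 = 2 * (norm a)\<^sup>2 + 2 * (norm b)\<^sup>2 - (norm (a + b))\<^sup>2"
  for a b :: "'a::real_inner"
  by (simp add: norm_diff_sq norm_add_sq)

lemma proj_exists:
  fixes D :: "'a::{real_inner,complete_space} set"
  assumes ne: "D \<noteq> {}" and cl: "closed D" and cv: "convex D"
  shows "\<exists>p. p \<in> D \<and> (\<forall>y\<in>D. norm (x - p) \<le> norm (x - y))"
proof -
  define g where "g y = (norm (x - y))\<^sup>2" for y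
  define d where "d = Inf (g ` D)"
  have bdd: "bdd_below (g ` D)" unfolding g_def by (rule bdd_belowI[of _ 0]) auto
  have dle: "d \<le> g y" if "y \<in> D" for y
    unfolding d_def using bdd that by (simp add: cInf_lower)
  have "\<exists>y\<in>D. g y < d + 1 / (real n + 1)" for n
  proof -
    have "Inf (g ` D) < d + 1 / (real n + 1)" unfolding d_def by simp
    then obtain t where "t \<in> g ` D" "t < d + 1 / (real n + 1)"
      using ne by (meson cInf_lessD image_is_empty)
    then show ?thesis by auto
  qed
  then obtain y where yD: "\<And>n. y n \<in> D" and yl: "\<And>n. g (y n) < d + 1 / (real n + 1)"
    by metis
  have par: "(norm (y n - y m))\<^sup>2 \<le> 2 / (real n + 1) + 2 / (real m + 1)" for n m
  proof -
    have mid: "(1/2) *\<^sub>R y n + (1/2) *\<^sub>R y m \<in> D"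
      using cv yD by (simp add: convex_def)
    have eq: "(x - y m) + (x - y n) = 2 *\<^sub>R (x - ((1/2) *\<^sub>R y n + (1/2) *\<^sub>R y m))"
      by (simp add: algebra_simps scaleR_2)
    have "(norm (y n - y m))\<^sup>2 = (norm ((x - y m) - (x - y n)))\<^sup>2" by (simp add: algebra_simps scaleR_2)
    also have "\<dots> = 2 * g (y m) + 2 * g (y n) - (norm (2 *\<^sub>R (x - ((1/2) *\<^sub>R y n + (1/2) *\<^sub>R y m))))\<^sup>2"
      unfolding parallelogram eq g_def ..
    also have "\<dots> = 2 * g (y m) + 2 * g (y n) - 4 * g ((1/2) *\<^sub>R y n + (1/2) *\<^sub>R y m)"
      by (simp add: g_def power_mult_distrib)
    also have "\<dots> \<le> 2 * (d + 1 / (real m + 1)) + 2 * (d + 1 / (real n + 1)) - 4 * d"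
      using yl[of m] yl[of n] dle[OF mid] by (smt (verit))
    finally show ?thesis by simp
  qed
  have "Cauchy y"
  proof (rule metric_CauchyI)
    fix e :: real assume e: "e > 0"
    obtain K :: nat where K: "4 / e\<^sup>2 < real K" using reals_Archimedean2 by blast
    show "\<exists>M. \<forall>m\<ge>M. \<forall>n\<ge>M. dist (y m) (y n) < e"
    proof (intro exI allI impI)
      fix m n assume m: "K \<le> m" and n: "K \<le> n"
      have e2: "e\<^sup>2 > 0" using e by simp
      have "2 / (real n + 1) \<le> 2 / (real K + 1)" "2 / (real m + 1) \<le> 2 / (real K + 1)"
        using m n by (simp_all add: frac_le)
      moreover have "4 / (real K + 1) < e\<^sup>2"
      proof -
        have "4 < real K * e\<^sup>2" using K e2 by (simp add: field_simps)
        then show ?thesis apply (simp add: field_simps) using e2 by linarith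
      qed
      ultimately have "(norm (y m - y n))\<^sup>2 < e\<^sup>2" using par[of m n] by linarith
      then show "dist (y m) (y n) < e" using e by (simp add: dist_norm power_less_imp_less_base)
    qed
  qed
  then obtain p where yp: "y \<longlonglongrightarrow> p" using Cauchy_convergent_iff convergent_def by blast
  have pD: "p \<in> D" using cl yD yp closed_sequential_limits by blast
  have "(\<lambda>n. g (y n)) \<longlonglongrightarrow> g p" unfolding g_def by (intro tendsto_intros yp)
  moreover have "(\<lambda>n. d + 1 / (real n + 1)) \<longlonglongrightarrow> d + 0"
    using LIMSEQ_inverse_real_of_nat_add[of d] by (simp add: inverse_eq_divide add.commute)
  ultimately have "g p \<le> d + 0" by (rule LIMSEQ_le) (use yl less_imp_le in auto)
  then have "\<forall>y\<in>D. norm (x - p) \<le> norm (x - y)"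
    using dle unfolding g_def by (smt (verit) power2_le_imp_le norm_ge_zero)
  with pD show ?thesis by blast
qed

lemma proj_prop:
  fixes D :: "'a::{real_inner,complete_space} set"
  assumes "D \<noteq> {}" "closed D" "convex D"
  shows "metric_proj D x \<in> D \<and> (\<forall>y\<in>D. norm (x - metric_proj D x) \<le> norm (x - y))"
  unfolding metric_proj_def by (rule someI_ex) (rule proj_exists[OF assms])

lemma min_imp_vi:
  fixes D :: "'a::real_inner set"
  assumes cv: "convex D" and pD: "p \<in> D" and mn: "\<forall>y\<in>D. norm (x - p) \<le> norm (x - y)"
    and yD: "y \<in> D"
  shows "inner (x - p) (y - p) \<le> 0"
proof (rule ccontr)
  define a where "a = inner (x - p) (y - p)"
  define b where "b = (norm (y - p))\<^sup>2"
  assume "\<not> inner (x - p) (y - p) \<le> 0"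
  then have a: "a > 0" unfolding a_def by simp
  have b: "b \<ge> 0" unfolding b_def by simp
  define t where "t = min 1 (a / (b + 1))"
  have t0: "t > 0" "t \<le> 1" using a b unfolding t_def by auto
  have "p + t *\<^sub>R (y - p) = (1 - t) *\<^sub>R p + t *\<^sub>R y" by (simp add: algebra_simps)
  also have "\<dots> \<in> D" using cv pD yD t0 by (simp add: convex_def)
  finally have inD: "p + t *\<^sub>R (y - p) \<in> D" .
  have "(norm (x - p))\<^sup>2 \<le> (norm (x - (p + t *\<^sub>R (y - p))))\<^sup>2"
    using mn inD by (simp add: power_mono)
  also have "x - (p + t *\<^sub>R (y - p)) = (x - p) - t *\<^sub>R (y - p)" by (simp add: algebra_simps)
  also have "(norm \<dots>)\<^sup>2 = (norm (x - p))\<^sup>2 - 2 * t * a + t\<^sup>2 * b"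
    unfolding norm_diff_scale_sq a_def b_def ..
  finally have "2 * t * a \<le> t\<^sup>2 * b" by simp
  then have "2 * a \<le> t * b" using t0 by (simp add: power2_eq_square)
  moreover have "t * b \<le> a / (b + 1) * b" using b unfolding t_def by (intro mult_right_mono) auto
  moreover have "a / (b + 1) * b < a" using a b by (simp add: field_simps)
  ultimately show False using a by linarith
qed

lemma proj_vi:
  fixes D :: "'a::{real_inner,complete_space} set"
  assumes "D \<noteq> {}" "closed D" "convex D" "y \<in> D"
  shows "inner (x - metric_proj D x) (y - metric_proj D x) \<le> 0"
  using proj_prop[OF assms(1-3)] min_imp_vi[OF assms(3)] assms(4) by blast

lemma proj_in:
  fixes D :: "'a::{real_inner,complete_space} set"
  assumes "D \<noteq> {}" "closed D" "convex D"
  shows "metric_proj D x \<in> D"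
  using proj_prop[OF assms] by blast

lemma vi_imp_proj:
  fixes D :: "'a::{real_inner,complete_space} set"
  assumes ne: "D \<noteq> {}" "closed D" "convex D" and pD: "p \<in> D"
    and vi: "\<forall>y\<in>D. inner (x - p) (y - p) \<le> 0"
  shows "metric_proj D x = p"
proof -
  let ?q = "metric_proj D x"
  have qD: "?q \<in> D" by (rule proj_in[OF ne])
  have 1: "inner (x - p) (?q - p) \<le> 0" using vi qD by blast
  have 2: "inner (x - ?q) (p - ?q) \<le> 0" by (rule proj_vi[OF ne pD])
  have "inner (x - p) (?q - p) + inner (x - ?q) (p - ?q) = inner (?q - p) (?q - p)"
    by (simp add: inner_diff_left inner_diff_right inner_commute)
  then have "inner (?q - p) (?q - p) \<le> 0" using 1 2 by linarith
  then have "?q - p = 0" by (metis inner_gt_zero_iff not_less)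
  then show ?thesis by simp
qed

lemma proj_firm:
  fixes D :: "'a::{real_inner,complete_space} set"
  assumes ne: "D \<noteq> {}" "closed D" "convex D"
  shows "(norm (metric_proj D a - metric_proj D b))\<^sup>2
           + (norm ((a - metric_proj D a) - (b - metric_proj D b)))\<^sup>2 \<le> (norm (a - b))\<^sup>2"
proof -
  define pa where "pa = metric_proj D a"
  define pb where "pb = metric_proj D b"
  have 1: "inner (a - pa) (pb - pa) \<le> 0" unfolding pa_def pb_def by (rule proj_vi[OF ne proj_in[OF ne]])
  have 2: "inner (b - pb) (pa - pb) \<le> 0" unfolding pa_def pb_def by (rule proj_vi[OF ne proj_in[OF ne]])
  have "inner (a - pa) (pb - pa) + inner (b - pb) (pa - pb) = - inner (pa - pb) ((a - b) - (pa - pb))"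
    by (simp add: inner_diff_left inner_diff_right inner_commute)
  then have 3: "inner (pa - pb) ((a - pa) - (b - pb)) \<ge> 0" using 1 2
    by (simp add: algebra_simps)
  have "a - b = (pa - pb) + ((a - pa) - (b - pb))" by simp
  then have "(norm (a - b))\<^sup>2 = (norm (pa - pb))\<^sup>2 + 2 * inner (pa - pb) ((a - pa) - (b - pb)) + (norm ((a - pa) - (b - pb)))\<^sup>2"
    by (metis norm_add_sq)
  with 3 show ?thesis unfolding pa_def[symmetric] pb_def[symmetric] by linarith
qed


lemma riesz:
  fixes L :: "'a::{real_inner,complete_space} \<Rightarrow> real"
  assumes add: "\<And>v w. L (v + w) = L v + L w"
    and sc: "\<And>c v. L (c *\<^sub>R v) = c * L v"
    and bd: "\<And>v. \<bar>L v\<bar> \<le> B * norm v"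
  shows "\<exists>q. \<forall>v. L v = inner q v"
proof (cases "\<forall>v. L v = 0")
  case True then show ?thesis by (intro exI[of _ 0]) simp
next
  case False
  then obtain w where w: "L w \<noteq> 0" by blast
  have bl: "bounded_linear L"
    by (rule bounded_linear_intro[where K = B]) (use add sc bd in \<open>auto simp: mult.commute\<close>)
  define K where "K = {v. L v = 0}"
  have L0: "L 0 = 0" using sc[of 0 0] by simp
  have Lm: "L (a - b) = L a - L b" for a b
    using add[of "a - b" b] by simp
  have Kne: "K \<noteq> {}" using L0 unfolding K_def by auto
  have Kcl: "closed K"
    unfolding closed_sequential_limits K_def
  proof (intro allI impI)
    fix s l assume h: "(\<forall>n. s n \<in> {v. L v = 0}) \<and> s \<longlonglongrightarrow> l"
    then have "(\<lambda>n. L (s n)) \<longlonglongrightarrow> L l" by (intro bounded_linear.tendsto[OF bl]) auto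
    moreover have "(\<lambda>n. L (s n)) = (\<lambda>n. 0)" using h by auto
    ultimately have "L l = 0" using LIMSEQ_unique tendsto_const by metis
    then show "l \<in> {v. L v = 0}" by simp
  qed
  have Kcv: "convex K"
    unfolding convex_def K_def by (simp add: add sc)
  define z where "z = w - metric_proj K w"
  have pK: "metric_proj K w \<in> K" by (rule proj_in[OF Kne Kcl Kcv])
  have Lz: "L z = L w" using pK unfolding z_def K_def by (simp add: Lm)
  have orth: "inner z k = 0" if k: "k \<in> K" for k
  proof -
    have 1: "metric_proj K w + k \<in> K" "metric_proj K w - k \<in> K"
      using pK k unfolding K_def by (simp_all add: add Lm)
    have "inner z k \<le> 0" using proj_vi[OF Kne Kcl Kcv 1(1), of w] unfolding z_def by simp
    moreover have "inner z (- k) \<le> 0" using proj_vi[OF Kne Kcl Kcv 1(2), of w] unfolding z_def by simp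
    ultimately show ?thesis by simp
  qed
  have z0: "inner z z \<noteq> 0" using Lz w L0 by auto
  show ?thesis
  proof (intro exI allI)
    fix v
    have "v - (L v / L z) *\<^sub>R z \<in> K" unfolding K_def using w Lz by (simp add: Lm sc)
    then have "inner z (v - (L v / L z) *\<^sub>R z) = 0" by (rule orth)
    then have "inner z v = (L v / L z) * inner z z" by (simp add: inner_diff_right)
    then have "L v = (L z / inner z z) * inner z v" using z0 w Lz by (simp add: field_simps)
    then show "L v = inner ((L z / inner z z) *\<^sub>R z) v" by simp
  qed
qed


lemma closure_span_closed:
  fixes S :: "'a::real_normed_vector set"
  assumes a: "a \<in> closure (span S)" and b: "b \<in> closure (span S)"
  shows "a + b \<in> closure (span S)" "a - b \<in> closure (span S)"
proof -
  have "a + b \<in> closure (span S) \<and> a - b \<in> closure (span S)"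
    unfolding closure_approachable
  proof (intro conjI allI impI)
    fix e :: real assume e: "e > 0"
    obtain s where s: "s \<in> span S" "dist s a < e/2" using a e closure_approachable by (metis half_gt_zero)
    obtain t where t: "t \<in> span S" "dist t b < e/2" using b e closure_approachable by (metis half_gt_zero)
    have "s + t \<in> span S" "s - t \<in> span S" using s t by (simp_all add: span_add span_diff)
    moreover have "dist (s + t) (a + b) < e"
    proof -
      have "dist (s + t) (a + b) = norm ((s - a) + (t - b))" by (simp add: dist_norm algebra_simps)
      also have "\<dots> \<le> norm (s - a) + norm (t - b)" by (rule norm_triangle_ineq)
      finally show ?thesis using s t by (simp add: dist_norm)
    qed
    moreover have "dist (s - t) (a - b) < e"
    proof -
      have "dist (s - t) (a - b) = norm ((s - a) - (t - b))" by (simp add: dist_norm algebra_simps)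
      also have "\<dots> \<le> norm (s - a) + norm (t - b)" by (rule norm_triangle_ineq4)
      finally show ?thesis using s t by (simp add: dist_norm)
    qed
    ultimately show "\<exists>y\<in>span S. dist y (a + b) < e" "\<exists>y\<in>span S. dist y (a - b) < e" by blast+
  qed
  then show "a + b \<in> closure (span S)" "a - b \<in> closure (span S)" by auto
qed

lemma weak_subseq:
  fixes u :: "nat \<Rightarrow> 'a::{real_inner,complete_space}"
  assumes bnd: "\<And>n. norm (u n) \<le> B"
  shows "\<exists>r q. strict_mono r \<and> (\<forall>v. (\<lambda>j. inner (u (r j)) v) \<longlonglongrightarrow> inner q v)"
proof -
  let ?P = "\<lambda>n. \<lambda>s. convergent (\<lambda>k. inner (u (s k)) (u n))"
  have B0: "B \<ge> 0" using bnd[of 0] norm_ge_zero order_trans by blast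
  have ibd: "\<bar>inner (u k) v\<bar> \<le> B * norm v" for k v
    using Cauchy_Schwarz_ineq2[of "u k" v] bnd[of k] by (meson mult_right_mono norm_ge_zero order_trans)
  interpret nat: subseqs ?P
  proof (unfold convergent_def, unfold subseqs_def, auto)
    fix n :: nat and s :: "nat \<Rightarrow> nat" assume s: "strict_mono s"
    have "bounded (range (\<lambda>k. inner (u (s k)) (u n)))"
      by (rule boundedI[where B = "B * norm (u n)"]) (use ibd in auto)
    then obtain l r where "strict_mono r" "((\<lambda>k. inner (u (s k)) (u n)) \<circ> r) \<longlonglongrightarrow> l"
      using bounded_imp_convergent_subsequence by blast
    thus "\<exists>s'. strict_mono (s'::nat\<Rightarrow>nat) \<and> (\<exists>l. (\<lambda>k. inner (u (s (s' k))) (u n)) \<longlonglongrightarrow> l)"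
      by (auto simp: comp_def)
  qed
  define d where "d = nat.diagseq"
  have subseq: "strict_mono d"
    unfolding d_def using nat.subseq_diagseq by auto
  have cnv_u: "?P n d" for n
  proof -
    have Pn_seqseq: "?P n (nat.seqseq (Suc n))"
      by (rule nat.seqseq_holds)
    have 1: "(\<lambda>k. inner (u ((nat.seqseq (Suc n) \<circ> (\<lambda>k. nat.fold_reduce (Suc n) k
      (Suc n + k))) k)) (u n)) = (\<lambda>k. inner (u (nat.seqseq (Suc n) k)) (u n)) \<circ>
      (\<lambda>k. nat.fold_reduce (Suc n) k (Suc n + k))"
      by auto
    have 2: "?P n (d \<circ> ((+) (Suc n)))"
      unfolding d_def nat.diagseq_seqseq 1
      by (intro convergent_subseq_convergent Pn_seqseq nat.subseq_diagonal_rest)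
    then obtain L where 3: "(\<lambda>na. inner (u (d (na + Suc n))) (u n)) \<longlonglongrightarrow> L"
      by (auto simp: add.commute dest: convergentD)
    then have "(\<lambda>k. inner (u (d k)) (u n)) \<longlonglongrightarrow> L"
      by (rule LIMSEQ_offset)
    then show ?thesis
      by (auto simp: convergent_def)
  qed
  define M where "M = closure (span (range u))"
  have cnv_span: "convergent (\<lambda>k. inner (u (d k)) v)" if "v \<in> span (range u)" for v
    using that
  proof (induction rule: span_induct_alt)
    case base then show ?case by (simp add: convergent_const)
  next
    case (step c x y)
    then obtain n where "x = u n" by auto
    from cnv_u[of n] obtain l where "(\<lambda>k. inner (u (d k)) (u n)) \<longlonglongrightarrow> l" by (auto simp: convergent_def)
    then have "(\<lambda>k. c * inner (u (d k)) (u n)) \<longlonglongrightarrow> c * l" by (rule tendsto_mult_left)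
    then have "convergent (\<lambda>k. c * inner (u (d k)) x)" using \<open>x = u n\<close> by (auto intro: convergentI)
    then show ?case using step(2) by (simp add: inner_add_right convergent_add)
  qed
  have cnv_M: "convergent (\<lambda>k. inner (u (d k)) v)" if vM: "v \<in> M" for v
  proof -
    have "Cauchy (\<lambda>k. inner (u (d k)) v)"
    proof (rule metric_CauchyI)
      fix e :: real assume e: "e > 0"
      define e1 where "e1 = e / (4 * (B + 1))"
      have e1: "e1 > 0" unfolding e1_def using e B0 by simp
      obtain s where s: "s \<in> span (range u)" "dist s v < e1"
        using vM e1 unfolding M_def closure_approachable by blast
      have "Cauchy (\<lambda>k. inner (u (d k)) s)" using cnv_span[OF s(1)] Cauchy_convergent_iff by blast
      then obtain N where N: "\<And>m n. m \<ge> N \<Longrightarrow> n \<ge> N \<Longrightarrow> dist (inner (u (d m)) s) (inner (u (d n)) s) < e/2"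
      proof -
        have "e/2 > 0" using e by simp
        from metric_CauchyD[OF \<open>Cauchy (\<lambda>k. inner (u (d k)) s)\<close> this] show ?thesis using that by blast
      qed
      show "\<exists>N. \<forall>m\<ge>N. \<forall>n\<ge>N. dist (inner (u (d m)) v) (inner (u (d n)) v) < e"
      proof (intro exI allI impI)
        fix m n assume mn: "m \<ge> N" "n \<ge> N"
        have "inner (u (d m)) v - inner (u (d n)) v
              = inner (u (d m)) (v - s) - inner (u (d n)) (v - s) + (inner (u (d m)) s - inner (u (d n)) s)"
          by (simp add: inner_diff_right)
        moreover have kk: "\<bar>inner (u (d k)) (v - s)\<bar> \<le> B * e1" for k
        proof -
          have "norm (v - s) \<le> e1" using s(2) by (simp add: dist_norm norm_minus_commute)
          then have "B * norm (v - s) \<le> B * e1" using B0 by (rule mult_left_mono)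
          then show ?thesis using ibd[of "d k" "v - s"] by linarith
        qed
        moreover note kk[of m] kk[of n]
        moreover have "\<bar>inner (u (d m)) s - inner (u (d n)) s\<bar> < e/2" using N[OF mn] by (simp add: dist_real_def)
        moreover have "2 * (B * e1) \<le> e / 2"
        proof -
          have "2 * (B * e1) = e * (2 * B) / (4 * (B + 1))" unfolding e1_def by simp
          also have "\<dots> \<le> e * (2 * (B + 1)) / (4 * (B + 1))"
            using e B0 by (intro divide_right_mono mult_left_mono) auto
          also have "\<dots> = e / 2" using B0 by (simp add: field_simps)
          finally show ?thesis .
        qed
        ultimately show "dist (inner (u (d m)) v) (inner (u (d n)) v) < e"
          unfolding dist_real_def by linarith
      qed
    qed
    then show ?thesis using Cauchy_convergent_iff by blast
  qed
  have "(0::'a) \<in> M" unfolding M_def by (rule subsetD[OF closure_subset span_zero])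
  then have Mne: "M \<noteq> {}" by auto
  have Mcl: "closed M" unfolding M_def by simp
  have Mcv: "convex M" unfolding M_def by (intro convex_closure subspace_imp_convex subspace_span)
  have uM: "u n \<in> M" for n unfolding M_def by (rule subsetD[OF closure_subset span_base]) simp
  have cnv: "convergent (\<lambda>k. inner (u (d k)) v)" for v
  proof -
    define w where "w = metric_proj M v"
    have wM: "w \<in> M" unfolding w_def by (rule proj_in[OF Mne Mcl Mcv])
    have orth: "inner (v - w) m = 0" if m: "m \<in> M" for m
    proof -
      have 1: "w + m \<in> M" "w - m \<in> M" using closure_span_closed[OF wM[unfolded M_def] m[unfolded M_def]] unfolding M_def by auto
      have "inner (v - w) m \<le> 0" using proj_vi[OF Mne Mcl Mcv 1(1), of v] unfolding w_def by simp
      moreover have "inner (v - w) (- m) \<le> 0" using proj_vi[OF Mne Mcl Mcv 1(2), of v] unfolding w_def by simp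
      ultimately show ?thesis by simp
    qed
    have "(\<lambda>k. inner (u (d k)) v) = (\<lambda>k. inner (u (d k)) w)"
    proof
      fix k
      have "inner (u (d k)) v = inner (u (d k)) w + inner (v - w) (u (d k))"
        by (simp add: inner_diff_left inner_commute)
      then show "inner (u (d k)) v = inner (u (d k)) w" using orth[OF uM] by simp
    qed
    then show ?thesis using cnv_M[OF wM] by simp
  qed
  define L where "L v = lim (\<lambda>k. inner (u (d k)) v)" for v
  have Lt: "(\<lambda>k. inner (u (d k)) v) \<longlonglongrightarrow> L v" for v
    unfolding L_def using cnv convergent_LIMSEQ_iff by blast
  have Ladd: "L (v + w) = L v + L w" for v w
  proof -
    have "(\<lambda>k. inner (u (d k)) (v + w)) \<longlonglongrightarrow> L v + L w"
      unfolding inner_add_right by (intro tendsto_add Lt)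
    then show ?thesis using Lt LIMSEQ_unique by blast
  qed
  have Lsc: "L (c *\<^sub>R v) = c * L v" for c v
  proof -
    have "(\<lambda>k. inner (u (d k)) (c *\<^sub>R v)) \<longlonglongrightarrow> c * L v"
      unfolding inner_scaleR_right by (intro tendsto_mult tendsto_const Lt)
    then show ?thesis using Lt LIMSEQ_unique by blast
  qed
  have Lbd: "\<bar>L v\<bar> \<le> B * norm v" for v
  proof -
    have "(\<lambda>k. \<bar>inner (u (d k)) v\<bar>) \<longlonglongrightarrow> \<bar>L v\<bar>" by (intro tendsto_rabs Lt)
    then show ?thesis using ibd by (intro LIMSEQ_le_const2) auto
  qed
  obtain q where q: "\<And>v. L v = inner q v" using riesz[OF Ladd Lsc Lbd] by blast
  show ?thesis using subseq Lt q by (intro exI[of _ d] exI[of _ q]) simp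
qed


lemma nexp_tendsto:
  fixes G :: "'a::real_normed_vector \<Rightarrow> 'a"
  assumes nexp: "\<And>a b. norm (G a - G b) \<le> norm (a - b)" and s: "s \<longlonglongrightarrow> l"
  shows "(\<lambda>n. G (s n)) \<longlonglongrightarrow> G l"
  using s unfolding LIMSEQ_iff by (meson le_less_trans nexp)

lemma bdd_inner_null:
  fixes a b :: "nat \<Rightarrow> 'a::real_inner"
  assumes "\<And>j. norm (a j) \<le> B" and "b \<longlonglongrightarrow> 0"
  shows "(\<lambda>j. inner (a j) (b j)) \<longlonglongrightarrow> 0"
proof (rule Lim_null_comparison)
  show "\<forall>\<^sub>F j in sequentially. norm (inner (a j) (b j)) \<le> B * norm (b j)"
  proof (intro always_eventually allI)
    fix j
    show "norm (inner (a j) (b j)) \<le> B * norm (b j)"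
      using Cauchy_Schwarz_ineq2[of "a j" "b j"] assms(1)[of j]
      by (simp add: mult_right_mono order_trans)
  qed
  have "(\<lambda>j. B * norm (b j)) \<longlonglongrightarrow> B * norm (0::'a)" by (intro tendsto_intros assms(2))
  then show "(\<lambda>j. B * norm (b j)) \<longlonglongrightarrow> 0" by simp
qed

lemma convex_identity:
  fixes g z1 z2 :: "'a::real_inner"
  assumes "a + b = 1"
  shows "a * (norm (g - z1))\<^sup>2 + b * (norm (g - z2))\<^sup>2
         = (norm (g - (a *\<^sub>R z1 + b *\<^sub>R z2)))\<^sup>2 + a * b * (norm (z1 - z2))\<^sup>2"
proof -
  have b: "b = 1 - a" using assms by simp
  show ?thesis unfolding b
    by (simp add: power2_norm_eq_inner inner_diff_left inner_diff_right inner_add_left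
        inner_add_right inner_commute algebra_simps)
qed


lemma fejer_main:
  fixes G :: "'a::{real_inner,complete_space} \<Rightarrow> 'a" and x :: "nat \<Rightarrow> 'a"
  assumes ne: "F \<noteq> {}" and Fdef: "F = {q. G q = q}"
    and nexp: "\<And>a b. norm (G a - G b) \<le> norm (a - b)"
    and eps: "\<epsilon> > 0"
    and qa: "\<And>y z. z \<in> F \<Longrightarrow> (norm (G y - z))\<^sup>2 \<le> (norm (y - z))\<^sup>2 - \<epsilon> * (norm (G y - y))\<^sup>2"
    and xs: "\<And>k. x (Suc k) = G (x k)"
  shows "\<exists>p\<in>F. weakly_converges_to x p \<and> (\<lambda>k. metric_proj F (x k)) \<longlonglongrightarrow> p"
proof -
  have Fcl: "closed F"
    unfolding closed_sequential_limits
  proof (intro allI impI)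
    fix s l assume h: "(\<forall>n. s n \<in> F) \<and> s \<longlonglongrightarrow> l"
    then have "(\<lambda>n. G (s n)) \<longlonglongrightarrow> G l" using nexp_tendsto[OF nexp] by blast
    moreover have "(\<lambda>n. G (s n)) = s" using h Fdef by auto
    ultimately have "G l = l" using h LIMSEQ_unique by metis
    then show "l \<in> F" using Fdef by simp
  qed
  have Fcv: "convex F"
    unfolding convex_def
  proof (intro ballI allI impI)
    fix z1 z2 and a b :: real assume z: "z1 \<in> F" "z2 \<in> F" and ab: "0 \<le> a" "0 \<le> b" "a + b = 1"
    define w where "w = a *\<^sub>R z1 + b *\<^sub>R z2"
    have G1: "norm (G w - z1) \<le> norm (w - z1)" using nexp[of w z1] z Fdef by simp
    have G2: "norm (G w - z2) \<le> norm (w - z2)" using nexp[of w z2] z Fdef by simp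
    have "(norm (G w - w))\<^sup>2 + a * b * (norm (z1 - z2))\<^sup>2
          = a * (norm (G w - z1))\<^sup>2 + b * (norm (G w - z2))\<^sup>2"
      using convex_identity[OF ab(3), of "G w" z1 z2] unfolding w_def by simp
    also have "\<dots> \<le> a * (norm (w - z1))\<^sup>2 + b * (norm (w - z2))\<^sup>2"
      using G1 G2 ab by (intro add_mono mult_left_mono power_mono) auto
    also have "\<dots> = (norm (w - w))\<^sup>2 + a * b * (norm (z1 - z2))\<^sup>2"
      using convex_identity[OF ab(3), of w z1 z2] unfolding w_def by simp
    finally have "G w = w" by simp
    then show "a *\<^sub>R z1 + b *\<^sub>R z2 \<in> F" using Fdef w_def by simp
  qed
  have fej1: "norm (x (Suc k) - z) \<le> norm (x k - z)" if "z \<in> F" for k z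
  proof -
    have "(norm (x (Suc k) - z))\<^sup>2 \<le> (norm (x k - z))\<^sup>2"
    proof -
      have "\<epsilon> * (norm (G (x k) - x k))\<^sup>2 \<ge> 0" using eps by simp
      then show ?thesis using qa[OF that, of "x k"] unfolding xs[of k] by linarith
    qed
    then show ?thesis using power2_le_imp_le norm_ge_zero by blast
  qed
  have fej: "norm (x m - z) \<le> norm (x k - z)" if "z \<in> F" "k \<le> m" for k m z
    using that(2)
  proof (induction m)
    case 0 then show ?case by simp
  next
    case (Suc m)
    show ?case
    proof (cases "k = Suc m")
      case True then show ?thesis by simp
    next
      case False
      then have "k \<le> m" using Suc(2) by simp
      then have "norm (x m - z) \<le> norm (x k - z)" by (rule Suc.IH)
      then show ?thesis using fej1[OF that(1), of m] by linarith
    qed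
  qed
  obtain z0 where z0: "z0 \<in> F" using ne by blast
  define B where "B = norm (x 0 - z0) + norm z0"
  have xb: "norm (x k) \<le> B" for k
  proof -
    have "norm (x k) \<le> norm (x k - z0) + norm z0" using norm_triangle_sub[of "x k" z0] by simp
    then show ?thesis using fej[OF z0, of 0 k] unfolding B_def by simp
  qed
  have asreg: "(\<lambda>k. G (x k) - x k) \<longlonglongrightarrow> 0"
  proof -
    define dd where "dd k = (norm (x k - z0))\<^sup>2" for k
    have "decseq dd" unfolding decseq_Suc_iff dd_def using fej1[OF z0] by (simp add: power_mono)
    moreover have "\<forall>i. 0 \<le> dd i" unfolding dd_def by simp
    ultimately obtain L where L: "dd \<longlonglongrightarrow> L" using decseq_convergent by blast
    have "(\<lambda>k. dd k - dd (Suc k)) \<longlonglongrightarrow> L - L"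
      by (intro tendsto_diff L) (rule LIMSEQ_Suc[OF L])
    then have D0: "(\<lambda>k. (dd k - dd (Suc k)) / \<epsilon>) \<longlonglongrightarrow> 0"
      using tendsto_divide_zero by fastforce
    have "(\<lambda>k. (norm (G (x k) - x k))\<^sup>2) \<longlonglongrightarrow> 0"
    proof (rule tendsto_sandwich[OF _ _ tendsto_const D0])
      show "\<forall>\<^sub>F k in sequentially. 0 \<le> (norm (G (x k) - x k))\<^sup>2" by simp
      show "\<forall>\<^sub>F k in sequentially. (norm (G (x k) - x k))\<^sup>2 \<le> (dd k - dd (Suc k)) / \<epsilon>"
      proof (intro always_eventually allI)
        fix k
        have "\<epsilon> * (norm (G (x k) - x k))\<^sup>2 \<le> dd k - dd (Suc k)"
          using qa[OF z0, of "x k"] unfolding dd_def xs by simp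
        then show "(norm (G (x k) - x k))\<^sup>2 \<le> (dd k - dd (Suc k)) / \<epsilon>"
          using eps by (simp add: field_simps)
      qed
    qed
    then have "(\<lambda>k. sqrt ((norm (G (x k) - x k))\<^sup>2)) \<longlonglongrightarrow> sqrt 0" by (rule tendsto_real_sqrt)
    then have "(\<lambda>k. norm (G (x k) - x k)) \<longlonglongrightarrow> 0" by simp
    then show ?thesis by (simp add: tendsto_norm_zero_iff)
  qed
  define pp where "pp k = metric_proj F (x k)" for k
  have ppF: "pp k \<in> F" for k unfolding pp_def by (rule proj_in[OF ne Fcl Fcv])
  have ppmin: "norm (x k - pp k) \<le> norm (x k - z)" if "z \<in> F" for k z
    using proj_prop[OF ne Fcl Fcv] that unfolding pp_def by blast
  have ppvi: "inner (x k - pp k) (z - pp k) \<le> 0" if "z \<in> F" for k z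
    unfolding pp_def by (rule proj_vi[OF ne Fcl Fcv that])
  define e where "e k = (norm (x k - pp k))\<^sup>2" for k
  have key: "(norm (pp m - pp k))\<^sup>2 \<le> e k - e m" if "k \<le> m" for k m
  proof -
    have "(norm (x m - pp k))\<^sup>2 = (norm ((x m - pp m) - (pp k - pp m)))\<^sup>2" by (simp add: algebra_simps)
    also have "\<dots> = e m - 2 * inner (x m - pp m) (pp k - pp m) + (norm (pp k - pp m))\<^sup>2"
      unfolding norm_diff_sq e_def ..
    finally have "(norm (x m - pp k))\<^sup>2 \<ge> e m + (norm (pp m - pp k))\<^sup>2"
      using ppvi[OF ppF[of k], of m] by (simp add: norm_minus_commute)
    moreover have "(norm (x m - pp k))\<^sup>2 \<le> e k"
      unfolding e_def using fej[OF ppF that] by (simp add: power_mono)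
    ultimately show ?thesis by simp
  qed
  have "decseq e" unfolding decseq_Suc_iff e_def
    using ppmin[OF ppF] fej1[OF ppF] by (meson norm_ge_zero order_trans power_mono)
  moreover have "\<forall>i. 0 \<le> e i" unfolding e_def by simp
  ultimately obtain Le where Le: "e \<longlonglongrightarrow> Le" using decseq_convergent by blast
  then have "Cauchy e" using LIMSEQ_imp_Cauchy by blast
  have "Cauchy pp"
  proof (rule metric_CauchyI)
    fix r :: real assume r: "r > 0"
    then have "r\<^sup>2 > 0" by simp
    then obtain N where N: "\<And>m n. m \<ge> N \<Longrightarrow> n \<ge> N \<Longrightarrow> dist (e m) (e n) < r\<^sup>2"
      using \<open>Cauchy e\<close> metric_CauchyD by blast
    show "\<exists>N. \<forall>m\<ge>N. \<forall>n\<ge>N. dist (pp m) (pp n) < r"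
    proof (intro exI allI impI)
      fix m n assume mn: "m \<ge> N" "n \<ge> N"
      have "(norm (pp m - pp n))\<^sup>2 < r\<^sup>2"
      proof (cases "n \<le> m")
        case True then show ?thesis using key[OF True] N[OF mn] by (simp add: dist_real_def)
      next
        case False then show ?thesis using key[of m n] N[OF mn] by (simp add: dist_real_def norm_minus_commute)
      qed
      then show "dist (pp m) (pp n) < r" using r by (simp add: dist_norm power_less_imp_less_base)
    qed
  qed
  then obtain p where pp: "pp \<longlonglongrightarrow> p" using Cauchy_convergent_iff convergent_def by blast
  have pF: "p \<in> F" using Fcl ppF pp closed_sequential_limits by blast
  have weak: "weakly_converges_to x p"
    unfolding weakly_converges_to_def
  proof (rule allI, rule ccontr)
    fix y assume nt: "\<not> (\<lambda>k. inner (x k) y) \<longlonglongrightarrow> inner p y"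
    then obtain r where r: "r > 0" and fr: "\<forall>no. \<exists>n\<ge>no. \<not> norm (inner (x n) y - inner p y) < r"
      unfolding LIMSEQ_iff by blast
    define S where "S = {n. r \<le> norm (inner (x n) y - inner p y)}"
    have infS: "infinite S" unfolding S_def infinite_nat_iff_unbounded_le using fr by (auto simp: not_less)
    define r1 where "r1 = enumerate S"
    have r1: "strict_mono r1" using strict_mono_enumerate[OF infS] r1_def by simp
    have r1S: "r1 j \<in> S" for j using enumerate_in_set[OF infS] r1_def by simp
    obtain r2 q where r2: "strict_mono r2" and wq: "\<forall>v. (\<lambda>j. inner (x (r1 (r2 j))) v) \<longlonglongrightarrow> inner q v"
      using weak_subseq[of "\<lambda>j. x (r1 j)" B] xb by blast
    define s where "s = r1 \<circ> r2"
    have s: "strict_mono s" unfolding s_def using r1 r2 strict_mono_o by blast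
    have ws: "(\<lambda>j. inner (x (s j)) v) \<longlonglongrightarrow> inner q v" for v using wq s_def by simp
    have sS: "s j \<in> S" for j using r1S s_def by simp
    have qF: "q \<in> F"
    proof -
      define c where "c = (norm (q - G q))\<^sup>2"
      define a where "a j = norm (x (s j) - q)" for j
      define ee where "ee j = norm (x (s j) - G (x (s j)))" for j
      have "(\<lambda>j. G (x (s j)) - x (s j)) \<longlonglongrightarrow> 0"
        using LIMSEQ_subseq_LIMSEQ[OF asreg s] by (simp add: o_def)
      then have "(\<lambda>j. norm (G (x (s j)) - x (s j))) \<longlonglongrightarrow> 0" by (simp add: tendsto_norm_zero_iff)
      then have ee0: "ee \<longlonglongrightarrow> 0" unfolding ee_def by (simp add: norm_minus_commute)
      have abd: "norm (a j) \<le> B + norm q" for j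
        unfolding a_def using xb[of "s j"] norm_triangle_ineq4[of "x (s j)" q] by simp
      have ineq: "c \<le> 2 * (a j * ee j) + (ee j)\<^sup>2 - 2 * inner (x (s j) - q) (q - G q)" for j
      proof -
        have "x (s j) - G q = (x (s j) - G (x (s j))) + (G (x (s j)) - G q)" by simp
        then have "norm (x (s j) - G q) \<le> norm (x (s j) - G (x (s j))) + norm (G (x (s j)) - G q)"
          by (metis norm_triangle_ineq)
        then have 1: "norm (x (s j) - G q) \<le> ee j + a j"
          unfolding ee_def a_def using nexp[of "x (s j)" q] by simp
        have "x (s j) - G q = (x (s j) - q) + (q - G q)" by simp
        then have 2: "(norm (x (s j) - G q))\<^sup>2 = (a j)\<^sup>2 + 2 * inner (x (s j) - q) (q - G q) + c"
          unfolding a_def c_def by (metis norm_add_sq)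
        have "(norm (x (s j) - G q))\<^sup>2 \<le> (ee j + a j)\<^sup>2"
          using 1 by (simp add: power_mono)
        then show ?thesis unfolding 2 power2_sum by (simp add: algebra_simps)
      qed
      have t1: "(\<lambda>j. a j * ee j) \<longlonglongrightarrow> 0"
        using bdd_inner_null[of a "B + norm q" ee, OF abd ee0] by simp
      have t3: "(\<lambda>j. inner (x (s j) - q) (q - G q)) \<longlonglongrightarrow> inner q (q - G q) - inner q (q - G q)"
        unfolding inner_diff_left by (intro tendsto_diff ws tendsto_const)
      have "(\<lambda>j. 2 * (a j * ee j) + (ee j)\<^sup>2 - 2 * inner (x (s j) - q) (q - G q))
             \<longlonglongrightarrow> 2 * 0 + 0\<^sup>2 - 2 * (inner q (q - G q) - inner q (q - G q))"
        by (intro tendsto_intros t1 ee0 t3)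
      then have "c \<le> 0" using ineq by (intro LIMSEQ_le_const) auto
      then have "G q = q" unfolding c_def by simp
      then show ?thesis using Fdef by simp
    qed
    have qp: "q = p"
    proof -
      have pps: "(\<lambda>j. pp (s j)) \<longlonglongrightarrow> p" using LIMSEQ_subseq_LIMSEQ[OF pp s] by (simp add: o_def)
      have R: "inner (x (s j) - pp (s j)) (q - pp (s j))
            = inner (x (s j)) (q - p) + inner (x (s j)) (p - pp (s j)) - inner (pp (s j)) (q - pp (s j))" for j
        by (simp add: inner_diff_left inner_diff_right algebra_simps)
      have "(\<lambda>j. p - pp (s j)) \<longlonglongrightarrow> p - p" by (intro tendsto_intros pps)
      then have t2: "(\<lambda>j. inner (x (s j)) (p - pp (s j))) \<longlonglongrightarrow> 0"
        using bdd_inner_null[of "\<lambda>j. x (s j)" B] xb by simp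
      have "(\<lambda>j. inner (x (s j) - pp (s j)) (q - pp (s j)))
             \<longlonglongrightarrow> inner q (q - p) + 0 - inner p (q - p)"
        unfolding R by (intro tendsto_intros ws t2 pps)
      moreover have "inner q (q - p) + 0 - inner p (q - p) = inner (q - p) (q - p)"
        by (simp add: inner_diff_left)
      ultimately have "inner (q - p) (q - p) \<le> 0"
        using ppvi[OF qF] by (metis (no_types, lifting) LIMSEQ_le_const2)
      then show ?thesis by (metis inner_gt_zero_iff not_less right_minus_eq)
    qed
    have "(\<lambda>j. norm (inner (x (s j)) y - inner p y)) \<longlonglongrightarrow> norm (inner q y - inner p y)"
      by (intro tendsto_intros ws)
    then have "r \<le> norm (inner q y - inner p y)" using sS unfolding S_def
      by (intro LIMSEQ_le_const) auto
    then show False using qp r by simp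
  qed
  show ?thesis using pF weak pp unfolding pp_def by blast
qed


lemma norm_sum_sq_le: "(norm (a + b))\<^sup>2 \<le> 2 * (norm a)\<^sup>2 + 2 * (norm b)\<^sup>2"
  for a b :: "'a::real_inner"
proof -
  have "(norm (a + b))\<^sup>2 \<le> (norm a + norm b)\<^sup>2" by (simp add: norm_triangle_ineq power_mono)
  also have "\<dots> \<le> 2 * (norm a)\<^sup>2 + 2 * (norm b)\<^sup>2"
    by (simp add: power2_sum) (smt (verit) sum_squares_bound)
  finally show ?thesis .
qed

lemma op_base:
  fixes h :: "'a::{real_inner,complete_space} \<Rightarrow> 'a" and D :: "'a set"
  assumes D: "D \<noteq> {}" "closed D" "convex D" and ism: "inv_strongly_monotone a h"
    and lam: "lam > 0" and c: "c \<le> lam * (2*a - lam)"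
  shows "(norm (metric_proj D (y - lam *\<^sub>R h y) - metric_proj D (z - lam *\<^sub>R h z)))\<^sup>2
        + (norm (((y - lam *\<^sub>R h y) - metric_proj D (y - lam *\<^sub>R h y))
                 - ((z - lam *\<^sub>R h z) - metric_proj D (z - lam *\<^sub>R h z))))\<^sup>2
        \<le> (norm (y - z))\<^sup>2 - c * (norm (h y - h z))\<^sup>2"
proof -
  have im: "inner (h y - h z) (y - z) \<ge> a * (norm (h y - h z))\<^sup>2"
    using ism unfolding inv_strongly_monotone_def by blast
  have "(y - lam *\<^sub>R h y) - (z - lam *\<^sub>R h z) = (y - z) - lam *\<^sub>R (h y - h z)"
    by (simp add: algebra_simps)
  then have "(norm ((y - lam *\<^sub>R h y) - (z - lam *\<^sub>R h z)))\<^sup>2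
      = (norm (y - z))\<^sup>2 - 2 * lam * inner (y - z) (h y - h z) + lam\<^sup>2 * (norm (h y - h z))\<^sup>2"
    by (simp only: norm_diff_scale_sq)
  also have "\<dots> \<le> (norm (y - z))\<^sup>2 - 2 * lam * (a * (norm (h y - h z))\<^sup>2) + lam\<^sup>2 * (norm (h y - h z))\<^sup>2"
    using im lam by (simp add: inner_commute)
  also have "\<dots> = (norm (y - z))\<^sup>2 - lam * (2*a - lam) * (norm (h y - h z))\<^sup>2"
    by (simp add: algebra_simps power2_eq_square)
  also have "\<dots> \<le> (norm (y - z))\<^sup>2 - c * (norm (h y - h z))\<^sup>2"
    using c by (simp add: mult_right_mono)
  finally show ?thesis using proj_firm[OF D, of "y - lam *\<^sub>R h y" "z - lam *\<^sub>R h z"] by linarith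
qed

lemma op_props:
  fixes h :: "'a::{real_inner,complete_space} \<Rightarrow> 'a" and D :: "'a set"
  assumes D: "D \<noteq> {}" "closed D" "convex D" and ism: "inv_strongly_monotone a h"
    and lam: "lam > 0" and c: "0 < c" "c \<le> lam * (2*a - lam)"
  shows "norm (metric_proj D (y - lam *\<^sub>R h y) - metric_proj D (z - lam *\<^sub>R h z)) \<le> norm (y - z)"
    and "metric_proj D (z - lam *\<^sub>R h z) = z \<Longrightarrow>
         (norm (metric_proj D (y - lam *\<^sub>R h y) - z))\<^sup>2 \<le> (norm (y - z))\<^sup>2
            - (min 1 (c / lam\<^sup>2) / 2) * (norm (y - metric_proj D (y - lam *\<^sub>R h y)))\<^sup>2"
    and "metric_proj D (z - lam *\<^sub>R h z) = z \<longleftrightarrow> z \<in> SOL D h"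
proof -
  let ?T = "\<lambda>y. metric_proj D (y - lam *\<^sub>R h y)"
  note base = op_base[OF D ism lam c(2)]
  show "norm (?T y - ?T z) \<le> norm (y - z)"
  proof -
    have "(norm (?T y - ?T z))\<^sup>2 \<le> (norm (y - z))\<^sup>2"
      using base[of y z] c(1) by (smt (verit) mult_nonneg_nonneg zero_le_power2)
    then show ?thesis using power2_le_imp_le norm_ge_zero by blast
  qed
  show "?T z = z \<Longrightarrow> (norm (?T y - z))\<^sup>2 \<le> (norm (y - z))\<^sup>2 - (min 1 (c / lam\<^sup>2) / 2) * (norm (y - ?T y))\<^sup>2"
  proof -
    assume Tz: "?T z = z"
    define w where "w = (y - ?T y) - lam *\<^sub>R (h y - h z)"
    define g where "g = norm (h y - h z)"
    define \<delta> where "\<delta> = min 1 (c / lam\<^sup>2) / 2"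
    have b: "(norm (?T y - z))\<^sup>2 + (norm w)\<^sup>2 \<le> (norm (y - z))\<^sup>2 - c * g\<^sup>2"
    proof -
      have "((y - lam *\<^sub>R h y) - ?T y) - ((z - lam *\<^sub>R h z) - ?T z) = w"
        unfolding w_def Tz by (simp add: algebra_simps)
      then show ?thesis using base[of y z] unfolding Tz g_def by simp
    qed
    have "y - ?T y = w + lam *\<^sub>R (h y - h z)" unfolding w_def by simp
    then have "(norm (y - ?T y))\<^sup>2 \<le> 2 * (norm w)\<^sup>2 + 2 * (lam\<^sup>2 * g\<^sup>2)"
      using norm_sum_sq_le[of w "lam *\<^sub>R (h y - h z)"] lam unfolding g_def by (simp add: power_mult_distrib)
    moreover have d0: "\<delta> \<ge> 0" "2 * \<delta> \<le> 1" "2 * \<delta> * lam\<^sup>2 \<le> c"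
      unfolding \<delta>_def using c lam by (auto simp: min_def field_simps)
    ultimately have "\<delta> * (norm (y - ?T y))\<^sup>2 \<le> \<delta> * (2 * (norm w)\<^sup>2 + 2 * (lam\<^sup>2 * g\<^sup>2))"
      by (simp add: mult_left_mono)
    also have "\<dots> = (2 * \<delta>) * (norm w)\<^sup>2 + (2 * \<delta> * lam\<^sup>2) * g\<^sup>2" by (simp add: algebra_simps)
    also have "\<dots> \<le> 1 * (norm w)\<^sup>2 + c * g\<^sup>2"
      using d0 by (intro add_mono mult_right_mono) auto
    finally show ?thesis using b unfolding \<delta>_def by simp
  qed
  show "?T z = z \<longleftrightarrow> z \<in> SOL D h"
  proof
    assume Tz: "?T z = z"
    have zD: "z \<in> D" using proj_in[OF D] Tz by metis
    have "inner (h z) (y - z) \<ge> 0" if y: "y \<in> D" for y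
    proof -
      have "inner ((z - lam *\<^sub>R h z) - z) (y - z) \<le> 0"
        using proj_vi[OF D y, of "z - lam *\<^sub>R h z"] Tz by simp
      then have "- lam * inner (h z) (y - z) \<le> 0" by simp
      then show ?thesis using lam by (simp add: zero_le_mult_iff)
    qed
    then show "z \<in> SOL D h" unfolding SOL_def using zD by blast
  next
    assume "z \<in> SOL D h"
    then have zD: "z \<in> D" and vi: "\<forall>y\<in>D. inner (h z) (y - z) \<ge> 0" unfolding SOL_def by auto
    show "?T z = z"
    proof (rule vi_imp_proj[OF D zD], intro ballI)
      fix y assume "y \<in> D"
      then have "inner (h z) (y - z) \<ge> 0" using vi by blast
      then show "inner ((z - lam *\<^sub>R h z) - z) (y - z) \<le> 0" using lam by simp
    qed
  qed
qed


theorem theorem4p2: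
  fixes N :: nat
    and f :: "nat \<Rightarrow> 'a::{real_inner, complete_space} \<Rightarrow> 'a"
    and C :: "nat \<Rightarrow> 'a set"
    and \<alpha>i :: "nat \<Rightarrow> real"
    and lam :: real
    and x0 :: 'a
    and x :: "nat \<Rightarrow> 'a"
  assumes N: "N \<ge> 1"
    and ism: "\<And>i. i \<in> {1..N} \<Longrightarrow> \<alpha>i i > 0 \<and> inv_strongly_monotone (\<alpha>i i) (f i)"
    and C_ne: "\<And>i. i \<in> {1..N} \<Longrightarrow> C i \<noteq> {}"
    and C_closed: "\<And>i. i \<in> {1..N} \<Longrightarrow> closed (C i)"
    and C_convex: "\<And>i. i \<in> {1..N} \<Longrightarrow> convex (C i)"
    and C_inter: "(\<Inter>i\<in>{1..N}. C i) \<noteq> {}"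
    and Psi_ne: "(\<Inter>i\<in>{1..N}. SOL (C i) (f i)) \<noteq> {}"
    and lam: "0 < lam" "lam < 2 * Min (\<alpha>i ` {1..N})"
    and x_0: "x 0 = x0"
    and x_step: "\<And>k. x (Suc k) =
        compose_upto (\<lambda>i y. metric_proj (C i) (y - lam *\<^sub>R f i y)) N (x k)"
  shows "\<exists>xs \<in> (\<Inter>i\<in>{1..N}. SOL (C i) (f i)).
           weakly_converges_to x xs \<and>
           (\<lambda>k. metric_proj (\<Inter>i\<in>{1..N}. SOL (C i) (f i)) (x k)) \<longlonglongrightarrow> xs"
proof -
  define Psi where "Psi = (\<Inter>i\<in>{1..N}. SOL (C i) (f i))"
  define T where "T = (\<lambda>i y. metric_proj (C i) (y - lam *\<^sub>R f i y))"
  define \<alpha> where "\<alpha> = Min (\<alpha>i ` {1..N})"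
  have fin: "finite (\<alpha>i ` {1..N})" and nemp: "\<alpha>i ` {1..N} \<noteq> {}" using N by auto
  have ale: "\<alpha> \<le> \<alpha>i i" if "i \<in> {1..N}" for i unfolding \<alpha>_def using fin that by simp
  have apos: "\<alpha> > 0" using Min_in[OF fin nemp] ism unfolding \<alpha>_def by auto
  define c where "c = lam * (2 * \<alpha> - lam)"
  have c0: "c > 0" unfolding c_def using lam \<alpha>_def by simp
  have cle: "c \<le> lam * (2 * \<alpha>i i - lam)" if "i \<in> {1..N}" for i
    unfolding c_def using ale[OF that] lam by (simp add: mult_left_mono)
  define \<delta> where "\<delta> = min 1 (c / lam\<^sup>2) / 2"
  have d0: "\<delta> > 0" unfolding \<delta>_def using c0 lam by simp
  note OP = op_props[OF C_ne C_closed C_convex conjunct2[OF ism] lam(1) c0 cle]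
  have Tne: "norm (T i a - T i b) \<le> norm (a - b)" if "i \<in> {1..N}" for i a b
    unfolding T_def by (rule OP(1)[OF that that that that that])
  have Tq: "(norm (T i y - z))\<^sup>2 \<le> (norm (y - z))\<^sup>2 - \<delta> * (norm (y - T i y))\<^sup>2"
    if "i \<in> {1..N}" "T i z = z" for i y z
    using OP(2)[OF that(1) that(1) that(1) that(1) that(1)] that(2) unfolding T_def \<delta>_def by blast
  have Tfix: "T i z = z \<longleftrightarrow> z \<in> SOL (C i) (f i)" if "i \<in> {1..N}" for i z
    unfolding T_def by (rule OP(3)[OF that that that that that])
  have PsiT: "T i z = z" if "z \<in> Psi" "i \<in> {1..N}" for i z
    using that Tfix unfolding Psi_def by blast
  have G1: "norm (compose_upto T n a - compose_upto T n b) \<le> norm (a - b)" if "n \<le> N" for n a b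
    using that
  proof (induction n arbitrary: a b)
    case 0 then show ?case by simp
  next
    case (Suc n)
    have "norm (compose_upto T (Suc n) a - compose_upto T (Suc n) b)
        = norm (compose_upto T n (T (Suc n) a) - compose_upto T n (T (Suc n) b))" by simp
    also have "\<dots> \<le> norm (T (Suc n) a - T (Suc n) b)" using Suc by simp
    also have "\<dots> \<le> norm (a - b)" using Suc(2) by (intro Tne) auto
    finally show ?case .
  qed
  have Gfix: "compose_upto T n z = z" if "n \<le> N" "z \<in> Psi" for n z
    using that(1)
  proof (induction n)
    case 0 then show ?case by simp
  next
    case (Suc n) then show ?case using PsiT[OF that(2), of "Suc n"] by simp
  qed
  have G2: "\<exists>\<epsilon>>0. \<forall>y z. z \<in> Psi \<longrightarrow>
      (norm (compose_upto T n y - z))\<^sup>2 \<le> (norm (y - z))\<^sup>2 - \<epsilon> * (norm (compose_upto T n y - y))\<^sup>2"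
    if "n \<le> N" for n
    using that
  proof (induction n)
    case 0 then show ?case by (intro exI[of _ 1]) simp
  next
    case (Suc n)
    then obtain \<epsilon> where e: "\<epsilon> > 0" and IH: "\<And>y z. z \<in> Psi \<Longrightarrow>
      (norm (compose_upto T n y - z))\<^sup>2 \<le> (norm (y - z))\<^sup>2 - \<epsilon> * (norm (compose_upto T n y - y))\<^sup>2"
      by auto
    have i: "Suc n \<in> {1..N}" using Suc(2) by simp
    define \<epsilon>' where "\<epsilon>' = min \<delta> \<epsilon> / 2"
    have e': "\<epsilon>' > 0" "2 * \<epsilon>' \<le> \<delta>" "2 * \<epsilon>' \<le> \<epsilon>" unfolding \<epsilon>'_def using e d0 by auto
    show ?case
    proof (intro exI[of _ \<epsilon>'] conjI allI impI e'(1))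
      fix y z assume z: "z \<in> Psi"
      define t where "t = T (Suc n) y"
      have "(norm (compose_upto T n t - z))\<^sup>2 \<le> (norm (t - z))\<^sup>2 - \<epsilon> * (norm (compose_upto T n t - t))\<^sup>2"
        by (rule IH[OF z])
      also have "(norm (t - z))\<^sup>2 \<le> (norm (y - z))\<^sup>2 - \<delta> * (norm (y - t))\<^sup>2"
        unfolding t_def by (rule Tq[OF i PsiT[OF z i]])
      finally have 1: "(norm (compose_upto T n t - z))\<^sup>2 \<le>
          (norm (y - z))\<^sup>2 - \<delta> * (norm (y - t))\<^sup>2 - \<epsilon> * (norm (compose_upto T n t - t))\<^sup>2" by simp
      have "compose_upto T n t - y = (compose_upto T n t - t) + (t - y)" by simp
      then have 2: "(norm (compose_upto T n t - y))\<^sup>2 \<le> 2 * (norm (compose_upto T n t - t))\<^sup>2 + 2 * (norm (y - t))\<^sup>2"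
        using norm_sum_sq_le[of "compose_upto T n t - t" "t - y"] by (simp add: norm_minus_commute)
      have "\<epsilon>' * (norm (compose_upto T n t - y))\<^sup>2 \<le> \<epsilon>' * (2 * (norm (compose_upto T n t - t))\<^sup>2 + 2 * (norm (y - t))\<^sup>2)"
        using 2 e' by (simp add: mult_left_mono)
      also have "\<dots> = (2 * \<epsilon>') * (norm (compose_upto T n t - t))\<^sup>2 + (2 * \<epsilon>') * (norm (y - t))\<^sup>2"
        by (simp add: algebra_simps)
      also have "\<dots> \<le> \<epsilon> * (norm (compose_upto T n t - t))\<^sup>2 + \<delta> * (norm (y - t))\<^sup>2"
        using e' by (intro add_mono mult_right_mono) auto
      finally have 3: "\<epsilon>' * (norm (compose_upto T n t - y))\<^sup>2 \<le> \<epsilon> * (norm (compose_upto T n t - t))\<^sup>2 + \<delta> * (norm (y - t))\<^sup>2" .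
      have "compose_upto T (Suc n) y = compose_upto T n t" unfolding t_def by simp
      then show "(norm (compose_upto T (Suc n) y - z))\<^sup>2 \<le> (norm (y - z))\<^sup>2 - \<epsilon>' * (norm (compose_upto T (Suc n) y - y))\<^sup>2"
        using 1 3 by simp
    qed
  qed
  obtain z0 where z0: "z0 \<in> Psi" using Psi_ne Psi_def by blast
  have G3: "\<forall>i\<in>{1..n}. q \<in> SOL (C i) (f i)" if "n \<le> N" "compose_upto T n q = q" for n q
    using that
  proof (induction n)
    case 0 then show ?case by simp
  next
    case (Suc n)
    have i: "Suc n \<in> {1..N}" using Suc(2) by simp
    obtain \<epsilon> where e: "\<epsilon> > 0" and IH: "\<And>y z. z \<in> Psi \<Longrightarrow>
      (norm (compose_upto T n y - z))\<^sup>2 \<le> (norm (y - z))\<^sup>2 - \<epsilon> * (norm (compose_upto T n y - y))\<^sup>2"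
      using G2[of n] Suc(2) by auto
    have eq: "compose_upto T n (T (Suc n) q) = q" using Suc(3) by simp
    have "(norm (q - z0))\<^sup>2 \<le> (norm (T (Suc n) q - z0))\<^sup>2"
      using IH[OF z0, of "T (Suc n) q"] e unfolding eq
      by (smt (verit) mult_nonneg_nonneg zero_le_power2)
    also have "\<dots> \<le> (norm (q - z0))\<^sup>2 - \<delta> * (norm (q - T (Suc n) q))\<^sup>2"
      by (rule Tq[OF i PsiT[OF z0 i]])
    finally have "\<delta> * (norm (q - T (Suc n) q))\<^sup>2 \<le> 0" by simp
    then have Tq': "T (Suc n) q = q" using d0
      by (metis eq_iff_diff_eq_0 mult_le_0_iff norm_eq_zero not_less power2_less_eq_zero_iff)
    then have "compose_upto T n q = q" using eq by simp
    then have "\<forall>i\<in>{1..n}. q \<in> SOL (C i) (f i)" using Suc by simp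
    moreover have "q \<in> SOL (C (Suc n)) (f (Suc n))" using Tfix[OF i] Tq' by blast
    ultimately show ?case by (auto simp: le_Suc_eq)
  qed
  have Feq: "Psi = {q. compose_upto T N q = q}"
  proof
    show "Psi \<subseteq> {q. compose_upto T N q = q}" using Gfix by blast
    show "{q. compose_upto T N q = q} \<subseteq> Psi" using G3[of N] unfolding Psi_def by blast
  qed
  obtain \<epsilon> where e: "\<epsilon> > 0" and qa: "\<And>y z. z \<in> Psi \<Longrightarrow>
      (norm (compose_upto T N y - z))\<^sup>2 \<le> (norm (y - z))\<^sup>2 - \<epsilon> * (norm (compose_upto T N y - y))\<^sup>2"
    using G2[of N] by auto
  have xs: "x (Suc k) = compose_upto T N (x k)" for k using x_step unfolding T_def by simp
  have "\<exists>p\<in>Psi. weakly_converges_to x p \<and> (\<lambda>k. metric_proj Psi (x k)) \<longlonglongrightarrow> p"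
  proof (rule fejer_main[where G = "compose_upto T N"])
    show "Psi \<noteq> {}" using z0 by blast
  qed (use Feq G1[OF order_refl] e qa xs in auto)
  then show ?thesis unfolding Psi_def .
qed

end
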